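(* Let ${}^*\mathbb{Z}=\mathbb{Z}^I/\mathcal{U}$ be an ultrapower of $\mathbb{Z}$ with respect to a nonprincipal ultrafilter $\mathcal{U}$ on a countably infinite set $I$, and let $\mathfrak{m}$ be a maximal ideal of ${}^*\mathbb{Z}$, with $\nu_{\mathfrak{m}}$ and $S_{\mathfrak{m}}$ as in the context. Then $P\mapsto\nu_{\mathfrak{m}}\big((P\,{}^*\mathbb{Z}_{\mathfrak{m}})\setminus\{0\}\big)$ is a one-to-one correspondence between the prime ideals $P$ of ${}^*\mathbb{Z}$ contained in $\mathfrak{m}$ and the proper radical subsemigroups of $S_{\mathfrak{m}}$ without right-end-point.
   Context: It is known (Olberding–Saydam) that the localization ${}^*\mathbb{Z}_{\mathfrak{m}}$ is a valuation domain; let $\nu_{\mathfrak{m}}$ be its valuation, with values in a totally ordered abelian group written multiplicatively, $\nu_{\mathfrak{m}}(a)\le\nu_{\mathfrak{m}}(b)$ iff $b/a\in{}^*\mathbb{Z}_{\mathfrak{m}}$, and $S_{\mathfrak{m}}=\nu_{\mathfrak{m}}({}^*\mathbb{Z}_{\mathfrak{m}}\setminus\{0\})$ as an ordered semigroup. A subsemigroup $T\subseteq S_{\mathfrak{m}}$ (a subset closed under multiplication) is proper if $T\neq S_{\mathfrak{m}}$; convex if $t_1<s<t_2$ with $t_1,t_2\in T$ implies $s\in T$; radical if whenever $x\in T$, $n>0$, $y\in S_{\mathfrak{m}}$, $y^n=x$, then $y\in T$; and without right-end-point if it is convex and $x\in T$, $y\in S_{\mathfrak{m}}$, $x<y$ imply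 $y\in T$. *)

theory Defs
  imports "HOL-Algebra.QuotRing" "HOL-Library.Countable_Set"
begin

definition nonprincipal_ultrafilter :: "'i set set \<Rightarrow> bool" where
  "nonprincipal_ultrafilter U \<longleftrightarrow>
     UNIV \<in> U \<and> {} \<notin> U \<and>
     (\<forall>A B. A \<in> U \<longrightarrow> B \<in> U \<longrightarrow> A \<inter> B \<in> U) \<and>
     (\<forall>A B. A \<in> U \<longrightarrow> A \<subseteq> B \<longrightarrow> B \<in> U) \<and>
     (\<forall>A. A \<in> U \<or> - A \<in> U) \<and>
     (\<forall>x. {x} \<notin> U)"

definition ZI :: "('i \<Rightarrow> int) ring" where
  "ZI = \<lparr>carrier = UNIV, monoid.mult = (\<lambda>f g i. f i * g i), one = (\<lambda>i. 1),
         zero = (\<lambda>i. 0), add = (\<lambda>f g i. f i + g i)\<rparr>"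

definition null_ideal :: "'i set set \<Rightarrow> ('i \<Rightarrow> int) set" where
  "null_ideal U = {f. {i. f i = 0} \<in> U}"

definition starZ :: "'i set set \<Rightarrow> ('i \<Rightarrow> int) set ring" where
  "starZ U = ZI Quot null_ideal U"

text \<open>Localization R_m of a (commutative, integral) ring R at a prime m, represented by
  fractions a/s given as pairs (a,s) with s \<notin> m.\<close>
definition loc :: "('a, 'b) ring_scheme \<Rightarrow> 'a set \<Rightarrow> ('a \<times> 'a) set" where
  "loc R m = {(a, s). a \<in> carrier R \<and> s \<in> carrier R \<and> s \<notin> m}"

definition loc_nz :: "('a, 'b) ring_scheme \<Rightarrow> 'a set \<Rightarrow> ('a \<times> 'a) set" where
  "loc_nz R m = {x \<in> loc R m. fst x \<noteq> \<zero>\<^bsub>R\<^esub>}"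

definition loc_mult :: "('a, 'b) ring_scheme \<Rightarrow> 'a \<times> 'a \<Rightarrow> 'a \<times> 'a \<Rightarrow> 'a \<times> 'a" where
  "loc_mult R x y = (fst x \<otimes>\<^bsub>R\<^esub> fst y, snd x \<otimes>\<^bsub>R\<^esub> snd y)"

text \<open>x divides y in R_m, i.e. y/x \<in> R_m: y = x * (c/u) for some c/u \<in> R_m.\<close>
definition loc_dvd :: "('a, 'b) ring_scheme \<Rightarrow> 'a set \<Rightarrow> 'a \<times> 'a \<Rightarrow> 'a \<times> 'a \<Rightarrow> bool" where
  "loc_dvd R m x y \<longleftrightarrow> (\<exists>c u. (c, u) \<in> loc R m \<and>
      fst y \<otimes>\<^bsub>R\<^esub> snd x \<otimes>\<^bsub>R\<^esub> u = fst x \<otimes>\<^bsub>R\<^esub> c \<otimes>\<^bsub>R\<^esub> snd y)"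

text \<open>The valuation \<nu>_m of the valuation domain R_m: the value of x is its class of
  associates in R_m (nonzero elements).\<close>
definition val :: "('a, 'b) ring_scheme \<Rightarrow> 'a set \<Rightarrow> 'a \<times> 'a \<Rightarrow> ('a \<times> 'a) set" where
  "val R m x = {y \<in> loc_nz R m. loc_dvd R m x y \<and> loc_dvd R m y x}"

definition value_sg :: "('a, 'b) ring_scheme \<Rightarrow> 'a set \<Rightarrow> ('a \<times> 'a) set set" where
  "value_sg R m = val R m ` loc_nz R m"

definition val_le :: "('a, 'b) ring_scheme \<Rightarrow> 'a set \<Rightarrow> ('a \<times> 'a) set \<Rightarrow> ('a \<times> 'a) set \<Rightarrow> bool" where
  "val_le R m A B \<longleftrightarrow> (\<exists>x \<in> loc_nz R m. \<exists>y \<in> loc_nz R m.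
      A = val R m x \<and> B = val R m y \<and> loc_dvd R m x y)"

definition val_less :: "('a, 'b) ring_scheme \<Rightarrow> 'a set \<Rightarrow> ('a \<times> 'a) set \<Rightarrow> ('a \<times> 'a) set \<Rightarrow> bool" where
  "val_less R m A B \<longleftrightarrow> val_le R m A B \<and> A \<noteq> B"

definition val_mult :: "('a, 'b) ring_scheme \<Rightarrow> 'a set \<Rightarrow> ('a \<times> 'a) set \<Rightarrow> ('a \<times> 'a) set \<Rightarrow> ('a \<times> 'a) set" where
  "val_mult R m A B = (THE C. \<exists>x \<in> loc_nz R m. \<exists>y \<in> loc_nz R m.
      A = val R m x \<and> B = val R m y \<and> C = val R m (loc_mult R x y))"

fun val_pow :: "('a, 'b) ring_scheme \<Rightarrow> 'a set \<Rightarrow> ('a \<times> 'a) set \<Rightarrow> nat \<Rightarrow> ('a \<times> 'a) set" where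
  "val_pow R m A 0 = val R m (\<one>\<^bsub>R\<^esub>, \<one>\<^bsub>R\<^esub>)"
| "val_pow R m A (Suc n) = val_mult R m A (val_pow R m A n)"

definition is_subsemigroup :: "('a, 'b) ring_scheme \<Rightarrow> 'a set \<Rightarrow> ('a \<times> 'a) set set \<Rightarrow> bool" where
  "is_subsemigroup R m T \<longleftrightarrow> T \<subseteq> value_sg R m \<and>
     (\<forall>x \<in> T. \<forall>y \<in> T. val_mult R m x y \<in> T)"

definition is_convex :: "('a, 'b) ring_scheme \<Rightarrow> 'a set \<Rightarrow> ('a \<times> 'a) set set \<Rightarrow> bool" where
  "is_convex R m T \<longleftrightarrow> (\<forall>t1 \<in> T. \<forall>t2 \<in> T. \<forall>s \<in> value_sg R m.
     val_less R m t1 s \<longrightarrow> val_less R m s t2 \<longrightarrow> s \<in> T)"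

definition is_radical :: "('a, 'b) ring_scheme \<Rightarrow> 'a set \<Rightarrow> ('a \<times> 'a) set set \<Rightarrow> bool" where
  "is_radical R m T \<longleftrightarrow> (\<forall>x \<in> T. \<forall>n::nat. \<forall>y \<in> value_sg R m.
     n > 0 \<longrightarrow> val_pow R m y n = x \<longrightarrow> y \<in> T)"

definition without_right_end_point :: "('a, 'b) ring_scheme \<Rightarrow> 'a set \<Rightarrow> ('a \<times> 'a) set set \<Rightarrow> bool" where
  "without_right_end_point R m T \<longleftrightarrow> is_convex R m T \<and>
     (\<forall>x \<in> T. \<forall>y \<in> value_sg R m. val_less R m x y \<longrightarrow> y \<in> T)"

text \<open>\<nu>_m((P R_m) \ {0}): the extended ideal P R_m consists of the fractions p/s, p \<in> P.\<close>
definition ext_val :: "('a, 'b) ring_scheme \<Rightarrow> 'a set \<Rightarrow> 'a set \<Rightarrow> ('a \<times> 'a) set set" where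
  "ext_val R m P = val R m ` {x \<in> loc_nz R m. fst x \<in> P}"

end

theory Submission imports Defs begin

fun lpow :: "('a, 'b) ring_scheme \<Rightarrow> 'a \<times> 'a \<Rightarrow> nat \<Rightarrow> 'a \<times> 'a" where
  "lpow R x 0 = (\<one>\<^bsub>R\<^esub>, \<one>\<^bsub>R\<^esub>)"
| "lpow R x (Suc n) = loc_mult R x (lpow R x n)"

locale valsetup = domain R + M: primeideal m R for R (structure) and m +
  assumes V: "\<And>a b. a \<in> carrier R \<Longrightarrow> b \<in> carrier R \<Longrightarrow>
     (\<exists>c u. c \<in> carrier R \<and> u \<in> carrier R \<and> u \<notin> m \<and> b \<otimes> u = a \<otimes> c) \<or>
     (\<exists>c u. c \<in> carrier R \<and> u \<in> carrier R \<and> u \<notin> m \<and> a \<otimes> u = b \<otimes> c)"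
begin

lemma loc_iff: "x \<in> loc R m \<longleftrightarrow> fst x \<in> carrier R \<and> snd x \<in> carrier R \<and> snd x \<notin> m"
  by (cases x) (auto simp: loc_def)

lemma nz_iff: "x \<in> loc_nz R m \<longleftrightarrow> fst x \<in> carrier R \<and> snd x \<in> carrier R \<and> snd x \<notin> m \<and> fst x \<noteq> \<zero>"
  by (auto simp: loc_nz_def loc_iff)

lemma notm_nz: "s \<notin> m \<Longrightarrow> s \<noteq> \<zero>"
  using M.additive_subgroup_axioms additive_subgroup.zero_closed by blast

lemma one_notm: "\<one> \<notin> m"
  using M.I_notcarr M.one_imp_carrier by blast

lemma notm_mult: "s \<in> carrier R \<Longrightarrow> t \<in> carrier R \<Longrightarrow> s \<notin> m \<Longrightarrow> t \<notin> m \<Longrightarrow> s \<otimes> t \<notin> m"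
  using M.I_prime by blast

lemma dvd_refl: "x \<in> loc R m \<Longrightarrow> loc_dvd R m x x"
  unfolding loc_dvd_def loc_iff
  by (rule exI[of _ \<one>], rule exI[of _ \<one>]) (auto simp: loc_def one_notm m_ac)

lemma dvd_trans:
  assumes x: "x \<in> loc R m" and y: "y \<in> loc R m" and z: "z \<in> loc R m"
    and xy: "loc_dvd R m x y" and yz: "loc_dvd R m y z"
  shows "loc_dvd R m x z"
proof -
  obtain c u where cu: "(c,u) \<in> loc R m" and E1: "fst y \<otimes> snd x \<otimes> u = fst x \<otimes> c \<otimes> snd y"
    using xy unfolding loc_dvd_def by blast
  obtain d v where dv: "(d,v) \<in> loc R m" and E2: "fst z \<otimes> snd y \<otimes> v = fst y \<otimes> d \<otimes> snd z"
    using yz unfolding loc_dvd_def by blast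
  have C: "fst x \<in> carrier R" "snd x \<in> carrier R" "fst y \<in> carrier R" "snd y \<in> carrier R"
     "fst z \<in> carrier R" "snd z \<in> carrier R" "c \<in> carrier R" "u \<in> carrier R" "d \<in> carrier R" "v \<in> carrier R"
    "snd y \<noteq> \<zero>" "u \<notin> m" "v \<notin> m"
    using x y z cu dv notm_nz by (auto simp: loc_iff)
  have "(fst z \<otimes> snd x \<otimes> (u \<otimes> v)) \<otimes> snd y = (snd x \<otimes> u) \<otimes> (fst z \<otimes> snd y \<otimes> v)"
    using C by (simp add: m_ac)
  also have "\<dots> = (snd x \<otimes> u) \<otimes> (fst y \<otimes> d \<otimes> snd z)" by (simp add: E2)
  also have "\<dots> = (d \<otimes> snd z) \<otimes> (fst y \<otimes> snd x \<otimes> u)" using C by (simp add: m_ac)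
  also have "\<dots> = (d \<otimes> snd z) \<otimes> (fst x \<otimes> c \<otimes> snd y)" by (simp add: E1)
  also have "\<dots> = (fst x \<otimes> (c \<otimes> d) \<otimes> snd z) \<otimes> snd y" using C by (simp add: m_ac)
  finally have "fst z \<otimes> snd x \<otimes> (u \<otimes> v) = fst x \<otimes> (c \<otimes> d) \<otimes> snd z"
    using C m_rcancel by simp
  moreover have "(c \<otimes> d, u \<otimes> v) \<in> loc R m" using C notm_mult by (auto simp: loc_def)
  ultimately show ?thesis unfolding loc_dvd_def by blast
qed

lemma dvd_mult:
  assumes "x \<in> loc R m" "x' \<in> loc R m" "y \<in> loc R m" "y' \<in> loc R m"
    and xy: "loc_dvd R m x x'" and yz: "loc_dvd R m y y'"
  shows "loc_dvd R m (loc_mult R x y) (loc_mult R x' y')"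
proof -
  obtain c u where cu: "(c,u) \<in> loc R m" and E1: "fst x' \<otimes> snd x \<otimes> u = fst x \<otimes> c \<otimes> snd x'"
    using xy unfolding loc_dvd_def by blast
  obtain d v where dv: "(d,v) \<in> loc R m" and E2: "fst y' \<otimes> snd y \<otimes> v = fst y \<otimes> d \<otimes> snd y'"
    using yz unfolding loc_dvd_def by blast
  have C: "fst x \<in> carrier R" "snd x \<in> carrier R" "fst y \<in> carrier R" "snd y \<in> carrier R"
     "fst x' \<in> carrier R" "snd x' \<in> carrier R" "fst y' \<in> carrier R" "snd y' \<in> carrier R"
     "c \<in> carrier R" "u \<in> carrier R" "d \<in> carrier R" "v \<in> carrier R"
    "u \<notin> m" "v \<notin> m"
    using assms cu dv by (auto simp: loc_iff)
  have "fst x' \<otimes> fst y' \<otimes> (snd x \<otimes> snd y) \<otimes> (u \<otimes> v) =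
      (fst x' \<otimes> snd x \<otimes> u) \<otimes> (fst y' \<otimes> snd y \<otimes> v)" using C by (simp add: m_ac)
  also have "\<dots> = (fst x \<otimes> c \<otimes> snd x') \<otimes> (fst y \<otimes> d \<otimes> snd y')" by (simp add: E1 E2)
  also have "\<dots> = fst x \<otimes> fst y \<otimes> (c \<otimes> d) \<otimes> (snd x' \<otimes> snd y')" using C by (simp add: m_ac)
  finally have "fst x' \<otimes> fst y' \<otimes> (snd x \<otimes> snd y) \<otimes> (u \<otimes> v) =
      fst x \<otimes> fst y \<otimes> (c \<otimes> d) \<otimes> (snd x' \<otimes> snd y')" .
  moreover have "(c \<otimes> d, u \<otimes> v) \<in> loc R m" using C notm_mult by (auto simp: loc_def)
  ultimately show ?thesis unfolding loc_dvd_def loc_mult_def by auto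
qed

lemma mult_nz: "x \<in> loc_nz R m \<Longrightarrow> y \<in> loc_nz R m \<Longrightarrow> loc_mult R x y \<in> loc_nz R m"
  by (auto simp: nz_iff loc_mult_def integral_iff notm_mult)

lemma nz_loc: "x \<in> loc_nz R m \<Longrightarrow> x \<in> loc R m"
  by (simp add: loc_nz_def)

lemma self_val: "x \<in> loc_nz R m \<Longrightarrow> x \<in> val R m x"
  by (simp add: val_def dvd_refl nz_loc)

lemma val_eq: "x \<in> loc_nz R m \<Longrightarrow> y \<in> loc_nz R m \<Longrightarrow>
   val R m x = val R m y \<longleftrightarrow> loc_dvd R m x y \<and> loc_dvd R m y x"
proof
  assume "x \<in> loc_nz R m" "y \<in> loc_nz R m" "val R m x = val R m y"
  then show "loc_dvd R m x y \<and> loc_dvd R m y x"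
    using self_val[of x] by (auto simp: val_def)
next
  assume a: "x \<in> loc_nz R m" "y \<in> loc_nz R m" "loc_dvd R m x y \<and> loc_dvd R m y x"
  show "val R m x = val R m y"
    unfolding val_def using a dvd_trans nz_loc by blast
qed

lemma val_le_iff: "x \<in> loc_nz R m \<Longrightarrow> y \<in> loc_nz R m \<Longrightarrow>
   val_le R m (val R m x) (val R m y) \<longleftrightarrow> loc_dvd R m x y"
proof
  assume a: "x \<in> loc_nz R m" "y \<in> loc_nz R m" "val_le R m (val R m x) (val R m y)"
  then obtain x' y' where b: "x' \<in> loc_nz R m" "y' \<in> loc_nz R m" "val R m x = val R m x'"
     "val R m y = val R m y'" "loc_dvd R m x' y'" unfolding val_le_def by blast
  then show "loc_dvd R m x y" using a val_eq dvd_trans nz_loc by meson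
qed (auto simp: val_le_def)

lemma val_mult_eq: "x \<in> loc_nz R m \<Longrightarrow> y \<in> loc_nz R m \<Longrightarrow>
   val_mult R m (val R m x) (val R m y) = val R m (loc_mult R x y)"
  unfolding val_mult_def
proof (rule the_equality)
  assume "x \<in> loc_nz R m" "y \<in> loc_nz R m"
  then show "\<exists>x'\<in>loc_nz R m. \<exists>y'\<in>loc_nz R m. val R m x = val R m x' \<and> val R m y = val R m y' \<and>
      val R m (loc_mult R x y) = val R m (loc_mult R x' y')" by blast
next
  fix C assume a: "x \<in> loc_nz R m" "y \<in> loc_nz R m" and
    "\<exists>x'\<in>loc_nz R m. \<exists>y'\<in>loc_nz R m. val R m x = val R m x' \<and> val R m y = val R m y' \<and>
      C = val R m (loc_mult R x' y')"
  then obtain x' y' where b: "x' \<in> loc_nz R m" "y' \<in> loc_nz R m" "val R m x = val R m x'"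
     "val R m y = val R m y'" "C = val R m (loc_mult R x' y')" by blast
  show "C = val R m (loc_mult R x y)"
    using a b by (simp add: val_eq mult_nz dvd_mult nz_loc)
qed

lemma one_nz: "(\<one>, \<one>) \<in> loc_nz R m"
  by (simp add: nz_iff one_notm)

lemma lpow_nz: "x \<in> loc_nz R m \<Longrightarrow> lpow R x n \<in> loc_nz R m"
  by (induction n) (auto simp: one_nz mult_nz)

lemma val_pow_eq: "x \<in> loc_nz R m \<Longrightarrow> val_pow R m (val R m x) n = val R m (lpow R x n)"
  by (induction n) (auto simp: val_mult_eq lpow_nz)

lemma one_dvd: "y \<in> loc R m \<Longrightarrow> loc_dvd R m (\<one>, \<one>) y"
  unfolding loc_dvd_def
  by (rule exI[of _ "fst y"], rule exI[of _ "snd y"]) (auto simp: loc_iff)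

lemma val_a1: "x \<in> loc_nz R m \<Longrightarrow> val R m x = val R m (fst x, \<one>)"
proof -
  assume x: "x \<in> loc_nz R m"
  then have x1: "(fst x, \<one>) \<in> loc_nz R m" by (auto simp: nz_iff one_notm)
  have "loc_dvd R m x (fst x, \<one>)" unfolding loc_dvd_def
    by (rule exI[of _ "snd x"], rule exI[of _ \<one>]) (use x in \<open>auto simp: nz_iff loc_def one_notm m_ac\<close>)
  moreover have "loc_dvd R m (fst x, \<one>) x" unfolding loc_dvd_def
    by (rule exI[of _ "\<one>"], rule exI[of _ "snd x"]) (use x in \<open>auto simp: nz_iff loc_def one_notm m_ac\<close>)
  ultimately show ?thesis using x x1 val_eq by blast
qed

lemma dvd_P:
  assumes P: "primeideal P R" "P \<subseteq> m" and x: "x \<in> loc R m" and y: "y \<in> loc R m"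
    and d: "loc_dvd R m x y" and xP: "fst x \<in> P"
  shows "fst y \<in> P"
proof -
  interpret P: primeideal P R by (rule P(1))
  obtain c u where cu: "(c,u) \<in> loc R m" and E1: "fst y \<otimes> snd x \<otimes> u = fst x \<otimes> c \<otimes> snd y"
    using d unfolding loc_dvd_def by blast
  have C: "fst x \<in> carrier R" "snd x \<in> carrier R" "fst y \<in> carrier R" "snd y \<in> carrier R"
    "c \<in> carrier R" "u \<in> carrier R" "u \<notin> P" "snd x \<notin> P"
    using x y cu P(2) by (auto simp: loc_iff)
  have "fst x \<otimes> c \<otimes> snd y \<in> P" using C xP P.I_r_closed by simp
  then have "fst y \<otimes> snd x \<otimes> u \<in> P" by (simp add: E1)
  then show ?thesis using C P.I_prime by (meson m_closed)
qed

lemma ext_val_mem: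
  assumes P: "primeideal P R" "P \<subseteq> m" and x: "x \<in> loc_nz R m"
  shows "val R m x \<in> ext_val R m P \<longleftrightarrow> fst x \<in> P"
proof
  assume "val R m x \<in> ext_val R m P"
  then obtain z where z: "z \<in> loc_nz R m" "fst z \<in> P" "val R m x = val R m z"
    unfolding ext_val_def by auto
  then show "fst x \<in> P" using dvd_P[OF P] x val_eq nz_loc by meson
qed (use x in \<open>auto simp: ext_val_def\<close>)

lemma lpow_P:
  assumes P: "primeideal P R" and w: "w \<in> loc_nz R m"
  shows "fst (lpow R w n) \<in> P \<Longrightarrow> n > 0 \<Longrightarrow> fst w \<in> P"
proof (induction n)
  case 0 then show ?case by simp
next
  case (Suc n)
  interpret P: primeideal P R by (rule P)
  have c: "fst w \<in> carrier R" "fst (lpow R w n) \<in> carrier R"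
    using w lpow_nz[OF w, of n] by (auto simp: nz_iff)
  have "fst w \<otimes> fst (lpow R w n) \<in> P" using Suc.prems by (simp add: loc_mult_def)
  then have "fst w \<in> P \<or> fst (lpow R w n) \<in> P" using P.I_prime c by blast
  moreover have "\<one> \<notin> P" using P.I_notcarr P.one_imp_carrier by blast
  ultimately show ?case using Suc.IH by (cases n) auto
qed

definition good where
  "good T \<longleftrightarrow> is_subsemigroup R m T \<and> T \<noteq> value_sg R m
               \<and> is_radical R m T \<and> without_right_end_point R m T"

lemma forward:
  assumes P: "primeideal P R" "P \<subseteq> m"
  shows "good (ext_val R m P)"
proof -
  interpret P: primeideal P R by (rule P(1))
  let ?T = "ext_val R m P"
  have one: "\<one> \<notin> P" using P.I_notcarr P.one_imp_carrier by blast
  have sub: "?T \<subseteq> value_sg R m" by (auto simp: ext_val_def value_sg_def)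
  have mem: "\<And>x. x \<in> loc_nz R m \<Longrightarrow> val R m x \<in> ?T \<longleftrightarrow> fst x \<in> P"
    using ext_val_mem[OF P] by blast
  have sg: "is_subsemigroup R m ?T"
    unfolding is_subsemigroup_def
  proof (intro conjI sub ballI)
    fix a b assume "a \<in> ?T" "b \<in> ?T"
    then obtain x y where "x \<in> loc_nz R m" "y \<in> loc_nz R m" "fst x \<in> P" "fst y \<in> P"
       "a = val R m x" "b = val R m y" unfolding ext_val_def by auto
    then show "val_mult R m a b \<in> ?T"
      using mem mult_nz val_mult_eq P.I_r_closed by (auto simp: loc_mult_def nz_iff)
  qed
  have ne: "?T \<noteq> value_sg R m"
  proof
    assume "?T = value_sg R m"
    then have "val R m (\<one>,\<one>) \<in> ?T" using one_nz by (auto simp: value_sg_def)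
    then show False using mem one_nz one by auto
  qed
  have rad: "is_radical R m ?T"
    unfolding is_radical_def
  proof (intro ballI allI impI)
    fix x n y assume x: "x \<in> ?T" and y: "y \<in> value_sg R m" and n: "0 < n"
      and e: "val_pow R m y n = x"
    obtain w where w: "w \<in> loc_nz R m" "y = val R m w" using y by (auto simp: value_sg_def)
    have "val R m (lpow R w n) \<in> ?T" using e x w val_pow_eq by simp
    then have "fst (lpow R w n) \<in> P" using mem lpow_nz w by blast
    then have "fst w \<in> P" using lpow_P[OF P(1) w(1)] n by blast
    then show "y \<in> ?T" using mem w by blast
  qed
  have up: "\<And>x y. x \<in> ?T \<Longrightarrow> y \<in> value_sg R m \<Longrightarrow> val_le R m x y \<Longrightarrow> y \<in> ?T"
  proof -
    fix a b assume a: "a \<in> ?T" and b: "b \<in> value_sg R m" and le: "val_le R m a b"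
    obtain x where x: "x \<in> loc_nz R m" "fst x \<in> P" "a = val R m x" using a by (auto simp: ext_val_def)
    obtain y where y: "y \<in> loc_nz R m" "b = val R m y" using b by (auto simp: value_sg_def)
    have "loc_dvd R m x y" using le x y val_le_iff by simp
    then have "fst y \<in> P" using dvd_P[OF P] x y nz_loc by blast
    then show "b \<in> ?T" using mem y by blast
  qed
  have wre: "without_right_end_point R m ?T"
    unfolding without_right_end_point_def is_convex_def val_less_def using up by blast
  show ?thesis unfolding good_def using sg ne rad wre by blast
qed

lemma inj: "inj_on (ext_val R m) {P. primeideal P R \<and> P \<subseteq> m}"
proof -
  have key: "P \<subseteq> Q" if P: "primeideal P R" "P \<subseteq> m" and Q: "primeideal Q R" "Q \<subseteq> m"
    and e: "ext_val R m P = ext_val R m Q" for P Q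
  proof
    fix p assume p: "p \<in> P"
    interpret P: primeideal P R by (rule P(1))
    interpret Q: primeideal Q R by (rule Q(1))
    show "p \<in> Q"
    proof (cases "p = \<zero>")
      case True then show ?thesis by simp
    next
      case False
      have pc: "p \<in> carrier R" using p P.a_subset by blast
      then have x: "(p, \<one>) \<in> loc_nz R m" using False by (simp add: nz_iff one_notm)
      then have "val R m (p, \<one>) \<in> ext_val R m P" using ext_val_mem[OF P x] p by simp
      then have "val R m (p, \<one>) \<in> ext_val R m Q" using e by simp
      then show ?thesis using ext_val_mem[OF Q x] by simp
    qed
  qed
  show ?thesis unfolding inj_on_def using key by blast
qed

lemma backward:
  assumes g: "good T"
  shows "\<exists>P. primeideal P R \<and> P \<subseteq> m \<and> ext_val R m P = T"
proof -
  have Tsub: "T \<subseteq> value_sg R m" and Tmul: "\<And>a b. a \<in> T \<Longrightarrow> b \<in> T \<Longrightarrow> val_mult R m a b \<in> T"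
    and Tne: "T \<noteq> value_sg R m"
    and Trad: "\<And>x n y. x \<in> T \<Longrightarrow> y \<in> value_sg R m \<Longrightarrow> n > 0 \<Longrightarrow> val_pow R m y n = x \<Longrightarrow> y \<in> T"
    and Tr: "\<And>x y. x \<in> T \<Longrightarrow> y \<in> value_sg R m \<Longrightarrow> val_less R m x y \<Longrightarrow> y \<in> T"
    using g unfolding good_def is_subsemigroup_def is_radical_def without_right_end_point_def by blast+
  have up: "loc_dvd R m x y \<Longrightarrow> x \<in> loc_nz R m \<Longrightarrow> y \<in> loc_nz R m \<Longrightarrow> val R m x \<in> T \<Longrightarrow> val R m y \<in> T" for x y
    using Tr[of "val R m x" "val R m y"] val_le_iff[of x y] unfolding val_less_def
    by (cases "val R m x = val R m y") (auto simp: value_sg_def)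
  have one: "val R m (\<one>, \<one>) \<notin> T"
  proof
    assume a: "val R m (\<one>, \<one>) \<in> T"
    have "value_sg R m \<subseteq> T"
    proof
      fix b assume "b \<in> value_sg R m"
      then obtain y where y: "y \<in> loc_nz R m" "b = val R m y" by (auto simp: value_sg_def)
      then show "b \<in> T" using up[OF one_dvd[OF nz_loc[OF y(1)]] one_nz y(1) a] by simp
    qed
    then show False using Tsub Tne by blast
  qed
  define P where "P = {a \<in> carrier R. a = \<zero> \<or> val R m (a, \<one>) \<in> T}"
  have a1: "a \<in> carrier R \<Longrightarrow> a \<noteq> \<zero> \<Longrightarrow> (a, \<one>) \<in> loc_nz R m" for a
    by (simp add: nz_iff one_notm)
  have dvd1: "loc_dvd R m (a, \<one>) (b, \<one>)" if "a \<in> carrier R" "c \<in> carrier R" "u \<in> carrier R" "u \<notin> m"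
     "b \<otimes> u = a \<otimes> c" "b \<in> carrier R" for a b c u
    unfolding loc_dvd_def using that by (intro exI[of _ c] exI[of _ u] conjI) (simp_all add: loc_def)
  have Pmul: "x \<otimes> a \<in> P" if "a \<in> P" "x \<in> carrier R" for a x
  proof (cases "x \<otimes> a = \<zero>")
    case True then show ?thesis using that by (simp add: P_def)
  next
    case False
    then have nz: "a \<noteq> \<zero>" "x \<noteq> \<zero>" using that by (auto simp: P_def)
    have "loc_dvd R m (a, \<one>) (x \<otimes> a, \<one>)"
      by (rule dvd1[of _ x \<one>]) (use that in \<open>auto simp: P_def one_notm m_comm\<close>)
    then show ?thesis using up[of "(a,\<one>)" "(x \<otimes> a, \<one>)"] a1 nz False that by (auto simp: P_def)
  qed
  have Padd: "a \<oplus> b \<in> P" if ab: "a \<in> P" "b \<in> P" for a b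
  proof -
    have c: "a \<in> carrier R" "b \<in> carrier R" using ab by (auto simp: P_def)
    show ?thesis
    proof (cases "a = \<zero> \<or> b = \<zero> \<or> a \<oplus> b = \<zero>")
      case True then show ?thesis using ab c by (auto simp: P_def)
    next
      case False
      have va: "val R m (a, \<one>) \<in> T" "val R m (b, \<one>) \<in> T" using ab False by (auto simp: P_def)
      from V[OF c] show ?thesis
      proof
        assume "\<exists>c u. c \<in> carrier R \<and> u \<in> carrier R \<and> u \<notin> m \<and> b \<otimes> u = a \<otimes> c"
        then obtain d u where du: "d \<in> carrier R" "u \<in> carrier R" "u \<notin> m" "b \<otimes> u = a \<otimes> d" by blast
        have "(a \<oplus> b) \<otimes> u = a \<otimes> (u \<oplus> d)" using du c by (simp add: l_distr r_distr m_comm)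
        then have "loc_dvd R m (a, \<one>) (a \<oplus> b, \<one>)" using dvd1[of a "u \<oplus> d" u "a \<oplus> b"] du c by simp
        then show ?thesis using up[of "(a,\<one>)" "(a \<oplus> b, \<one>)"] a1 False c va by (auto simp: P_def)
      next
        assume "\<exists>c u. c \<in> carrier R \<and> u \<in> carrier R \<and> u \<notin> m \<and> a \<otimes> u = b \<otimes> c"
        then obtain d u where du: "d \<in> carrier R" "u \<in> carrier R" "u \<notin> m" "a \<otimes> u = b \<otimes> d" by blast
        have "(a \<oplus> b) \<otimes> u = b \<otimes> (d \<oplus> u)" using du c by (simp add: l_distr r_distr m_comm)
        then have "loc_dvd R m (b, \<one>) (a \<oplus> b, \<one>)" using dvd1[of b "d \<oplus> u" u "a \<oplus> b"] du c by simp
        then show ?thesis using up[of "(b,\<one>)" "(a \<oplus> b, \<one>)"] a1 False c va by (auto simp: P_def)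
      qed
    qed
  qed
  have Pneg: "\<ominus> a \<in> P" if "a \<in> P" for a
  proof -
    have "(\<ominus> \<one>) \<otimes> a \<in> P" using Pmul that by simp
    then show ?thesis using that by (simp add: P_def l_minus)
  qed
  have Psub: "P \<subseteq> carrier R" by (auto simp: P_def)
  have idl: "ideal P R"
  proof (rule idealI)
    show "ring R" by (rule ring_axioms)
    show "subgroup P (add_monoid R)"
    proof
      show "P \<subseteq> carrier (add_monoid R)" using Psub by simp
      show "\<one>\<^bsub>add_monoid R\<^esub> \<in> P" by (simp add: P_def)
      show "x \<otimes>\<^bsub>add_monoid R\<^esub> y \<in> P" if "x \<in> P" "y \<in> P" for x y using Padd that by simp
      show "inv\<^bsub>add_monoid R\<^esub> x \<in> P" if "x \<in> P" for x
        using Pneg that Psub a_inv_def by (metis subsetD)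
    qed
    show "x \<otimes> a \<in> P" if "a \<in> P" "x \<in> carrier R" for a x using Pmul that by blast
    show "a \<otimes> x \<in> P" if "a \<in> P" "x \<in> carrier R" for a x using Pmul that Psub m_comm by (metis subsetD)
  qed
  have oneP: "\<one> \<notin> P" using one by (simp add: P_def)
  have prime: "primeideal P R"
  proof (rule primeidealI[OF idl is_cring])
    show "carrier R \<noteq> P" using oneP by auto
    fix a b assume c: "a \<in> carrier R" "b \<in> carrier R" and abP: "a \<otimes> b \<in> P"
    show "a \<in> P \<or> b \<in> P"
    proof (cases "a = \<zero> \<or> b = \<zero>")
      case True then show ?thesis using c by (auto simp: P_def)
    next
      case False
      then have abnz: "a \<otimes> b \<noteq> \<zero>" using c integral_iff by blast
      have vab: "val R m (a \<otimes> b, \<one>) \<in> T" using abP abnz by (simp add: P_def)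
      have sq: "val R m (x \<otimes> x, \<one>) \<in> T \<Longrightarrow> x \<in> carrier R \<Longrightarrow> x \<noteq> \<zero> \<Longrightarrow> x \<in> P" for x
      proof -
        assume h: "val R m (x \<otimes> x, \<one>) \<in> T" "x \<in> carrier R" "x \<noteq> \<zero>"
        have "lpow R (x, \<one>) 2 = (x \<otimes> x, \<one>)" using h by (simp add: numeral_2_eq_2 loc_mult_def)
        then have "val_pow R m (val R m (x, \<one>)) 2 = val R m (x \<otimes> x, \<one>)"
          using val_pow_eq[OF a1[OF h(2,3)]] by simp
        then have "val R m (x, \<one>) \<in> T"
          using Trad[OF h(1), of "val R m (x, \<one>)" 2] a1[OF h(2,3)] by (auto simp: value_sg_def)
        then show "x \<in> P" using h by (simp add: P_def)
      qed
      from V[OF c] show ?thesis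
      proof
        assume "\<exists>c u. c \<in> carrier R \<and> u \<in> carrier R \<and> u \<notin> m \<and> b \<otimes> u = a \<otimes> c"
        then obtain d u where du: "d \<in> carrier R" "u \<in> carrier R" "u \<notin> m" "b \<otimes> u = a \<otimes> d" by blast
        have "(b \<otimes> b) \<otimes> u = (a \<otimes> b) \<otimes> d"
        proof -
          have "(b \<otimes> b) \<otimes> u = b \<otimes> (b \<otimes> u)" using c du by (simp add: m_assoc)
          also have "\<dots> = b \<otimes> (a \<otimes> d)" using du by simp
          also have "\<dots> = (a \<otimes> b) \<otimes> d" using c du by (simp add: m_ac)
          finally show ?thesis .
        qed
        then have "loc_dvd R m (a \<otimes> b, \<one>) (b \<otimes> b, \<one>)" using dvd1[of "a \<otimes> b" d u "b \<otimes> b"] du c by simp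
        then have "val R m (b \<otimes> b, \<one>) \<in> T" using up vab a1 c False abnz integral_iff by (metis m_closed)
        then show ?thesis using sq c False by blast
      next
        assume "\<exists>c u. c \<in> carrier R \<and> u \<in> carrier R \<and> u \<notin> m \<and> a \<otimes> u = b \<otimes> c"
        then obtain d u where du: "d \<in> carrier R" "u \<in> carrier R" "u \<notin> m" "a \<otimes> u = b \<otimes> d" by blast
        have "(a \<otimes> a) \<otimes> u = (a \<otimes> b) \<otimes> d"
        proof -
          have "(a \<otimes> a) \<otimes> u = a \<otimes> (a \<otimes> u)" using c du by (simp add: m_assoc)
          also have "\<dots> = a \<otimes> (b \<otimes> d)" using du by simp
          also have "\<dots> = (a \<otimes> b) \<otimes> d" using c du by (simp add: m_ac)
          finally show ?thesis .
        qed
        then have "loc_dvd R m (a \<otimes> b, \<one>) (a \<otimes> a, \<one>)" using dvd1[of "a \<otimes> b" d u "a \<otimes> a"] du c by simp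
        then have "val R m (a \<otimes> a, \<one>) \<in> T" using up vab a1 c False abnz integral_iff by (metis m_closed)
        then show ?thesis using sq c False by blast
      qed
    qed
  qed
  have Pm: "P \<subseteq> m"
  proof
    fix a assume a: "a \<in> P"
    show "a \<in> m"
    proof (rule ccontr)
      assume am: "a \<notin> m"
      then have nz: "a \<noteq> \<zero>" using notm_nz by blast
      have c: "a \<in> carrier R" using a by (simp add: P_def)
      have "loc_dvd R m (a, \<one>) (\<one>, \<one>)" using dvd1[of a \<one> a \<one>] c am by simp
      then have "val R m (\<one>, \<one>) \<in> T" using up a1 c nz one_nz a by (auto simp: P_def)
      then show False using one by blast
    qed
  qed
  have "ext_val R m P = T"
  proof
    show "ext_val R m P \<subseteq> T"
    proof
      fix t assume "t \<in> ext_val R m P"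
      then obtain x where x: "x \<in> loc_nz R m" "fst x \<in> P" "t = val R m x" by (auto simp: ext_val_def)
      then show "t \<in> T" using val_a1[OF x(1)] by (auto simp: P_def nz_iff)
    qed
    show "T \<subseteq> ext_val R m P"
    proof
      fix t assume t: "t \<in> T"
      then obtain x where x: "x \<in> loc_nz R m" "t = val R m x" using Tsub by (auto simp: value_sg_def)
      then have "fst x \<in> P" using val_a1[OF x(1)] t by (auto simp: P_def nz_iff)
      then show "t \<in> ext_val R m P" using x by (auto simp: ext_val_def)
    qed
  qed
  then show ?thesis using prime Pm by blast
qed

theorem main: "bij_betw (ext_val R m) {P. primeideal P R \<and> P \<subseteq> m}
     {T. is_subsemigroup R m T \<and> T \<noteq> value_sg R m
               \<and> is_radical R m T \<and> without_right_end_point R m T}"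
  unfolding bij_betw_def
proof (intro conjI inj)
  show "ext_val R m ` {P. primeideal P R \<and> P \<subseteq> m} = {T. is_subsemigroup R m T \<and> T \<noteq> value_sg R m
               \<and> is_radical R m T \<and> without_right_end_point R m T}"
    using forward backward unfolding good_def by blast
qed

end


lemma ZI_cring: "cring (ZI :: ('i \<Rightarrow> int) ring)"
proof (rule cringI)
  show "abelian_group (ZI :: ('i \<Rightarrow> int) ring)"
    by (rule abelian_groupI) (auto simp: ZI_def fun_eq_iff algebra_simps intro!: exI[of _ "\<lambda>i. - _ i"])
  show "Group.comm_monoid (ZI :: ('i \<Rightarrow> int) ring)"
    by (rule comm_monoidI) (auto simp: ZI_def fun_eq_iff algebra_simps)
  show "\<And>x y z. x \<in> carrier ZI \<Longrightarrow> y \<in> carrier ZI \<Longrightarrow> z \<in> carrier ZI \<Longrightarrow>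
     (x \<oplus>\<^bsub>ZI\<^esub> y) \<otimes>\<^bsub>ZI\<^esub> z = x \<otimes>\<^bsub>ZI\<^esub> z \<oplus>\<^bsub>ZI\<^esub> y \<otimes>\<^bsub>ZI\<^esub> z"
    by (auto simp: ZI_def fun_eq_iff algebra_simps)
qed

lemma ZI_minus: "\<ominus>\<^bsub>ZI\<^esub> f = (\<lambda>i. - f i)"
proof -
  interpret cring ZI by (rule ZI_cring)
  show ?thesis by (rule minus_equality) (auto simp: ZI_def)
qed

lemma uf_int: "nonprincipal_ultrafilter U \<Longrightarrow> A \<in> U \<Longrightarrow> B \<in> U \<Longrightarrow> A \<inter> B \<in> U"
  unfolding nonprincipal_ultrafilter_def by blast
lemma uf_mono: "nonprincipal_ultrafilter U \<Longrightarrow> A \<in> U \<Longrightarrow> A \<subseteq> B \<Longrightarrow> B \<in> U"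
  unfolding nonprincipal_ultrafilter_def by blast

lemma null_prime:
  assumes U: "nonprincipal_ultrafilter U"
  shows "primeideal (null_ideal U) ZI"
proof -
  interpret cring ZI by (rule ZI_cring)
  have UNIV: "UNIV \<in> U" and emp: "{} \<notin> U" and ult: "\<And>A. A \<in> U \<or> - A \<in> U"
    using U unfolding nonprincipal_ultrafilter_def by blast+
  have idl: "ideal (null_ideal U) ZI"
  proof (rule idealI)
    show "ring ZI" by (rule ring_axioms)
    show "subgroup (null_ideal U) (add_monoid ZI)"
    proof
      show "null_ideal U \<subseteq> carrier (add_monoid ZI)" by (simp add: ZI_def)
      show "\<one>\<^bsub>add_monoid ZI\<^esub> \<in> null_ideal U" using UNIV by (simp add: ZI_def null_ideal_def)
      show "x \<otimes>\<^bsub>add_monoid ZI\<^esub> y \<in> null_ideal U" if "x \<in> null_ideal U" "y \<in> null_ideal U" for x y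
        using uf_mono[OF U uf_int[OF U that[unfolded null_ideal_def mem_Collect_eq]]]
        by (auto simp: ZI_def null_ideal_def intro!: uf_mono[OF U uf_int[OF U that[unfolded null_ideal_def mem_Collect_eq]]])
      show "inv\<^bsub>add_monoid ZI\<^esub> x \<in> null_ideal U" if "x \<in> null_ideal U" for x
        unfolding a_inv_def[symmetric] ZI_minus using that by (simp add: null_ideal_def)
    qed
    show "x \<otimes>\<^bsub>ZI\<^esub> a \<in> null_ideal U" if "a \<in> null_ideal U" "x \<in> carrier ZI" for a x
      by (auto simp: ZI_def null_ideal_def intro!: uf_mono[OF U that(1)[unfolded null_ideal_def mem_Collect_eq]])
    show "a \<otimes>\<^bsub>ZI\<^esub> x \<in> null_ideal U" if "a \<in> null_ideal U" "x \<in> carrier ZI" for a x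
      by (auto simp: ZI_def null_ideal_def intro!: uf_mono[OF U that(1)[unfolded null_ideal_def mem_Collect_eq]])
  qed
  show ?thesis
  proof (rule primeidealI[OF idl ZI_cring])
    show "carrier ZI \<noteq> null_ideal U"
    proof
      assume "carrier ZI = null_ideal U"
      then have "(\<lambda>i. 1::int) \<in> null_ideal U" by (simp add: ZI_def)
      then show False using emp by (simp add: null_ideal_def)
    qed
    fix a b assume "a \<otimes>\<^bsub>ZI\<^esub> b \<in> null_ideal U"
    then have ab: "{i. a i = 0} \<union> {i. b i = 0} \<in> U" by (auto simp: ZI_def null_ideal_def Collect_disj_eq)
    show "a \<in> null_ideal U \<or> b \<in> null_ideal U"
    proof (rule ccontr)
      assume "\<not> ?thesis"
      then have "- {i. a i = 0} \<in> U" "- {i. b i = 0} \<in> U" using ult by (auto simp: null_ideal_def)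
      then have "- {i. a i = 0} \<inter> - {i. b i = 0} \<inter> ({i. a i = 0} \<union> {i. b i = 0}) \<in> U"
        using uf_int[OF U] ab by blast
      then show False using emp by (metis Compl_Un Compl_disjoint2)
    qed
  qed
qed

lemma int_bez: "\<exists>a' b' u v. (x::int) * b' = y * a' \<and> u * a' + v * b' = 1"
proof (cases "x = 0 \<and> y = 0")
  case True then show ?thesis by (intro exI[of _ 1] exI[of _ 0]) simp
next
  case False
  define d where "d = gcd x y"
  have d0: "d \<noteq> 0" using False by (simp add: d_def)
  obtain a' where a: "x = d * a'" unfolding d_def by (meson dvd_def gcd_dvd1)
  obtain b' where b: "y = d * b'" unfolding d_def by (meson dvd_def gcd_dvd2)
  obtain u v where uv: "u * x + v * y = d" unfolding d_def using bezout_int by blast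
  have "d * (u * a' + v * b') = d * 1" using uv a b by (simp add: algebra_simps)
  then have "u * a' + v * b' = 1" using d0 by (metis mult_left_cancel)
  moreover have "x * b' = y * a'" using a b by simp
  ultimately show ?thesis by blast
qed

lemma ZI_bez: "\<exists>a' b' u v :: 'i \<Rightarrow> int. (\<forall>i. f i * b' i = g i * a' i) \<and> (\<forall>i. u i * a' i + v i * b' i = 1)"
proof -
  have "\<forall>i. \<exists>t. f i * fst (snd t) = g i * fst t \<and> fst (snd (snd t)) * fst t + snd (snd (snd t)) * fst (snd t) = 1"
    using int_bez by fastforce
  then obtain F where "\<forall>i. f i * fst (snd (F i)) = g i * fst (F i) \<and> fst (snd (snd (F i))) * fst (F i) + snd (snd (snd (F i))) * fst (snd (F i)) = 1"
    by metis
  then show ?thesis by (intro exI[of _ "\<lambda>i. fst (F i)"] exI[of _ "\<lambda>i. fst (snd (F i))"]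
      exI[of _ "\<lambda>i. fst (snd (snd (F i)))"] exI[of _ "\<lambda>i. snd (snd (snd (F i)))"]) simp
qed

lemma starZ_V:
  assumes U: "nonprincipal_ultrafilter U" and mi: "ideal m (starZ U)" and m1: "\<one>\<^bsub>starZ U\<^esub> \<notin> m"
    and A: "A \<in> carrier (starZ U)" and B: "B \<in> carrier (starZ U)"
  shows "(\<exists>c u. c \<in> carrier (starZ U) \<and> u \<in> carrier (starZ U) \<and> u \<notin> m \<and> B \<otimes>\<^bsub>starZ U\<^esub> u = A \<otimes>\<^bsub>starZ U\<^esub> c) \<or>
     (\<exists>c u. c \<in> carrier (starZ U) \<and> u \<in> carrier (starZ U) \<and> u \<notin> m \<and> A \<otimes>\<^bsub>starZ U\<^esub> u = B \<otimes>\<^bsub>starZ U\<^esub> c)"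
proof -
  let ?S = "starZ U" and ?I = "null_ideal U"
  interpret P: primeideal ?I ZI by (rule null_prime[OF U])
  interpret S: domain ?S unfolding starZ_def by (rule P.quotient_is_domain)
  interpret mI: ideal m ?S by (rule mi)
  let ?h = "(+>\<^bsub>ZI\<^esub>) ?I"
  have hom: "?h \<in> ring_hom ZI ?S" unfolding starZ_def by (rule P.rcos_ring_hom)
  have surj: "\<exists>f. X = ?h f" if "X \<in> carrier ?S" for X
    using that unfolding starZ_def FactRing_def using A_RCOSETS_def'[of ZI ?I] by (auto simp: ZI_def)
  obtain f g where fg: "A = ?h f" "B = ?h g" using surj A B by blast
  obtain a' b' u v :: "'a \<Rightarrow> int" where E: "\<forall>i. f i * b' i = g i * a' i" "\<forall>i. u i * a' i + v i * b' i = 1"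
    using ZI_bez by blast
  have car: "?h x \<in> carrier ?S" for x using ring_hom_closed[OF hom] by (simp add: ZI_def)
  have hm: "?h (x \<otimes>\<^bsub>ZI\<^esub> y) = ?h x \<otimes>\<^bsub>?S\<^esub> ?h y" for x y using ring_hom_mult[OF hom] by (simp add: ZI_def)
  have ha: "?h (x \<oplus>\<^bsub>ZI\<^esub> y) = ?h x \<oplus>\<^bsub>?S\<^esub> ?h y" for x y using ring_hom_add[OF hom] by (simp add: ZI_def)
  have h1: "?h \<one>\<^bsub>ZI\<^esub> = \<one>\<^bsub>?S\<^esub>" using ring_hom_one[OF hom] by simp
  have e1: "f \<otimes>\<^bsub>ZI\<^esub> b' = g \<otimes>\<^bsub>ZI\<^esub> a'" using E(1) by (simp add: ZI_def fun_eq_iff)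
  have e2: "u \<otimes>\<^bsub>ZI\<^esub> a' \<oplus>\<^bsub>ZI\<^esub> v \<otimes>\<^bsub>ZI\<^esub> b' = \<one>\<^bsub>ZI\<^esub>" using E(2) by (simp add: ZI_def fun_eq_iff)
  have AB: "A \<otimes>\<^bsub>?S\<^esub> ?h b' = B \<otimes>\<^bsub>?S\<^esub> ?h a'" using e1 fg hm by metis
  have one: "?h u \<otimes>\<^bsub>?S\<^esub> ?h a' \<oplus>\<^bsub>?S\<^esub> ?h v \<otimes>\<^bsub>?S\<^esub> ?h b' = \<one>\<^bsub>?S\<^esub>" using e2 hm ha h1 by metis
  show ?thesis
  proof (cases "?h a' \<notin> m")
    case True
    then have "B \<otimes>\<^bsub>?S\<^esub> ?h a' = A \<otimes>\<^bsub>?S\<^esub> ?h b'" using AB by simp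
    then show ?thesis using True car by blast
  next
    case False
    show ?thesis
    proof (cases "?h b' \<notin> m")
      case True then show ?thesis using AB car by blast
    next
      case False2: False
      have "?h u \<otimes>\<^bsub>?S\<^esub> ?h a' \<oplus>\<^bsub>?S\<^esub> ?h v \<otimes>\<^bsub>?S\<^esub> ?h b' \<in> m"
        using False False2 car mI.I_l_closed mI.a_closed by simp
      then show ?thesis using one m1 by simp
    qed
  qed
qed

theorem theorem4p14:
  fixes U :: "'i set set" and m :: "('i \<Rightarrow> int) set set"
  assumes "infinite (UNIV :: 'i set)" and "countable (UNIV :: 'i set)"
    and "nonprincipal_ultrafilter U"
    and "maximalideal m (starZ U)"
  shows "bij_betw (ext_val (starZ U) m)
           {P. primeideal P (starZ U) \<and> P \<subseteq> m}
           {T. is_subsemigroup (starZ U) m T \<and> T \<noteq> value_sg (starZ U) m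
               \<and> is_radical (starZ U) m T \<and> without_right_end_point (starZ U) m T}"
proof -
  interpret P: primeideal "null_ideal U" ZI by (rule null_prime[OF assms(3)])
  interpret S: domain "starZ U" unfolding starZ_def by (rule P.quotient_is_domain)
  interpret mM: maximalideal m "starZ U" by (rule assms(4))
  have mp: "primeideal m (starZ U)" by (rule S.maximalideal_prime[OF assms(4)])
  have m1: "\<one>\<^bsub>starZ U\<^esub> \<notin> m" using mM.I_notcarr mM.one_imp_carrier by blast
  interpret valsetup "starZ U" m
  proof (rule valsetup.intro[OF S.domain_axioms mp])
    show "valsetup_axioms (starZ U) m"
      by unfold_locales (rule starZ_V[OF assms(3) mM.is_ideal m1])
  qed
  show ?thesis by (rule main)
qed

end
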